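(* For $\beta = n^2$ and $\epsilon = \frac{1}{10}$, any $(1\pm\epsilon)$ for-each cut sketching algorithm for $n$-node $\beta$-balanced graphs must output $\Omega(n \beta^{1/2})$ bits in the worst case.
   Context: Let $G=(V,E,w)$ be a weighted directed graph with non-negative weights; $w(S,T)$ is the total weight of edges from $S$ to $T$ and $\overline S=V\setminus S$. $G$ is $\beta$-balanced if it is strongly connected and $w(S,\overline S)\le\beta\,w(\overline S,S)$ for all $\varnothing\ne S\subsetneq V$. A function $g$ outputs a $(1\pm\epsilon)$ for-each cut sketch of $G$ if there is a recovering function $f$ such that for each $S\subseteq V$, with probability at least $2/3$, $(1-\epsilon)w(S,\overline S)\le f(S,g(G))\le(1+\epsilon)w(S,\overline S)$. A for-each cut sketching algorithm for a class of graphs is such a $g$ working for every graph in the class; its output size is the number of bits of $g(G)$. *)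

theory Defs
  imports "HOL-Probability.Probability_Mass_Function"
begin

text \<open>An n-node weighted digraph has vertex set V = {0..<n} and is given by a weight
function w, where w i j is the weight of the edge (i,j) (0 = no edge).
We require non-negative weights and zero weight outside V, so that the
representation of a graph is canonical.\<close>

definition wgraph :: "nat \<Rightarrow> (nat \<Rightarrow> nat \<Rightarrow> real) \<Rightarrow> bool" where
  "wgraph n w \<longleftrightarrow> (\<forall>i j. 0 \<le> w i j) \<and> (\<forall>i j. (i \<ge> n \<or> j \<ge> n) \<longrightarrow> w i j = 0)"

definition wset :: "(nat \<Rightarrow> nat \<Rightarrow> real) \<Rightarrow> nat set \<Rightarrow> nat set \<Rightarrow> real" where
  "wset w S T = (\<Sum>i\<in>S. \<Sum>j\<in>T. w i j)"

definition strongly_connected :: "nat \<Rightarrow> (nat \<Rightarrow> nat \<Rightarrow> real) \<Rightarrow> bool" where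
  "strongly_connected n w \<longleftrightarrow>
     (\<forall>i<n. \<forall>j<n. (i, j) \<in> {(a, b). a < n \<and> b < n \<and> w a b > 0}\<^sup>*)"

definition balanced :: "nat \<Rightarrow> real \<Rightarrow> (nat \<Rightarrow> nat \<Rightarrow> real) \<Rightarrow> bool" where
  "balanced n \<beta> w \<longleftrightarrow> wgraph n w \<and> strongly_connected n w \<and>
     (\<forall>S. S \<noteq> {} \<and> S \<subset> {0..<n} \<longrightarrow>
        wset w S ({0..<n} - S) \<le> \<beta> * wset w ({0..<n} - S) S)"

definition foreach_cut_sketch ::
  "nat \<Rightarrow> real \<Rightarrow> real \<Rightarrow> ((nat \<Rightarrow> nat \<Rightarrow> real) \<Rightarrow> bool list pmf) \<Rightarrow> (nat set \<Rightarrow> bool list \<Rightarrow> real) \<Rightarrow> bool"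
where
  "foreach_cut_sketch n \<beta> \<epsilon> g f \<longleftrightarrow>
     (\<forall>w. balanced n \<beta> w \<longrightarrow> (\<forall>S. S \<subseteq> {0..<n} \<longrightarrow>
        measure_pmf.prob (g w)
          {s. (1 - \<epsilon>) * wset w S ({0..<n} - S) \<le> f S s \<and>
              f S s \<le> (1 + \<epsilon>) * wset w S ({0..<n} - S)} \<ge> 2/3))"

end

theory Submission
  imports Defs
begin

lemma averaging:
  fixes P :: "'a pmf" and I :: "'b set" and E :: "'b \<Rightarrow> 'a set"
  assumes fin: "finite I" and pr: "\<forall>x\<in>I. measure_pmf.prob P (E x) \<ge> q"
  shows "\<exists>s\<in>set_pmf P. q * card I \<le> (\<Sum>x\<in>I. indicator (E x) s :: real)"
proof -
  define Y where "Y s = (\<Sum>x\<in>I. indicator (E x) s :: real)" for s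
  have Yc: "Y s = real (card {x\<in>I. s \<in> E x})" for s
    unfolding Y_def using fin by (simp add: indicator_def sum.If_cases) (rule arg_cong[where f=card], blast)
  have Vsub: "Y ` set_pmf P \<subseteq> real ` {0..card I}"
    using fin by (auto simp: Yc intro!: imageI card_mono)
  have finV: "finite (Y ` set_pmf P)" using Vsub finite_subset by blast
  have neV: "Y ` set_pmf P \<noteq> {}" by (simp add: set_pmf_not_empty)
  define M where "M = Max (Y ` set_pmf P)"
  have Min: "M \<in> Y ` set_pmf P" using finV neV M_def Max_in by blast
  have int: "integrable (measure_pmf P) Y"
    by (rule measure_pmf.integrable_const_bound[where B="card I"]) (auto simp: Yc intro!: card_mono fin)
  have "measure_pmf.expectation P Y \<le> M"
  proof (rule measure_pmf.integral_le_const[OF int])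
    show "AE x in measure_pmf P. Y x \<le> M"
      using AE_measure_pmf[of P] finV M_def by (auto elim!: AE_mp intro!: Max_ge)
  qed
  moreover have "measure_pmf.expectation P Y = (\<Sum>x\<in>I. measure_pmf.prob P (E x))"
    unfolding Y_def
  proof (subst Bochner_Integration.integral_sum)
    fix x assume "x \<in> I"
    show "integrable (measure_pmf P) (indicator (E x) :: 'a \<Rightarrow> real)"
      by (rule measure_pmf.integrable_const_bound[where B=1]) (auto simp: indicator_def)
  qed simp
  moreover have "(\<Sum>x\<in>I. measure_pmf.prob P (E x)) \<ge> q * card I"
    using sum_mono[of I "\<lambda>_. q" "\<lambda>x. measure_pmf.prob P (E x)"] pr by (simp add: mult.commute)
  ultimately show ?thesis using Min Y_def by force
qed

lemma ball_bound:
  assumes fin: "finite I"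
  shows "card {C. C \<subseteq> I \<and> card C \<le> q} * 2^(card I - q) \<le> (3::nat)^(card I)"
proof -
  have "(\<Prod>x\<in>I. (1::nat) + 2) = (1+2)^card I" by (rule prod_constant)
  hence "(3::nat)^(card I) = (\<Prod>x\<in>I. 1 + 2)" by (simp add: numeral_3_eq_3)
  also have "\<dots> = (\<Sum>X\<in>Pow I. (\<Prod>x\<in>X. 1) * (\<Prod>x\<in>I-X. 2))"
    by (rule prod_add[OF fin])
  also have "\<dots> = (\<Sum>X\<in>Pow I. 2^(card I - card X))"
    using fin by (intro sum.cong) (auto simp: card_Diff_subset finite_subset)
  finally have e: "(3::nat)^(card I) = (\<Sum>X\<in>Pow I. 2^(card I - card X))" .
  have "card {C. C \<subseteq> I \<and> card C \<le> q} * 2^(card I - q)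
      = (\<Sum>X\<in>{C. C \<subseteq> I \<and> card C \<le> q}. (2::nat)^(card I - q))" by simp
  also have "\<dots> \<le> (\<Sum>X\<in>{C. C \<subseteq> I \<and> card C \<le> q}. 2^(card I - card X))"
    by (intro sum_mono power_increasing) auto
  also have "\<dots> \<le> (\<Sum>X\<in>Pow I. 2^(card I - card X))"
    using fin by (intro sum_mono2) auto
  finally show ?thesis using e by simp
qed

lemma short_lists: "card {s :: bool list. length s < p} < 2^p"
proof -
  have "{s :: bool list. length s < p} = (\<Union>l<p. {s. set s \<subseteq> UNIV \<and> length s = l})" by auto
  hence "card {s :: bool list. length s < p} \<le> (\<Sum>l<p. card {s :: bool list. set s \<subseteq> UNIV \<and> length s = l})"
    by (simp add: card_UN_le)
  also have "\<dots> = (\<Sum>l<p. 2^l)" using card_lists_length_eq[of "UNIV :: bool set"] by simp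
  also have "\<dots> = 2^p - 1" using sum_power2[of p] by (simp add: atLeast0LessThan)
  finally show ?thesis by (metis diff_less le_less_trans less_numeral_extra(1) pos2 zero_less_power)
qed

lemma counting:
  fixes I :: "'b set" and \<sigma> :: "'b set \<Rightarrow> bool list" and D :: "bool list \<Rightarrow> 'b set"
  assumes fin: "finite I" and cI: "card I = 15 * p" and p1: "p \<ge> 1"
    and close: "\<forall>A. A \<subseteq> I \<longrightarrow> card ((A - D (\<sigma> A)) \<union> (D (\<sigma> A) - A)) \<le> 5 * p"
    and Dsub: "\<forall>s. D s \<subseteq> I"
  shows "\<exists>A. A \<subseteq> I \<and> length (\<sigma> A) \<ge> p"
proof (rule ccontr)
  assume "\<not> ?thesis"
  hence short: "\<forall>A. A \<subseteq> I \<longrightarrow> length (\<sigma> A) < p" by (auto simp: not_le)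
  define U where "U = Pow I"
  define Bl where "Bl t = {A. A \<subseteq> I \<and> card ((A - D t) \<union> (D t - A)) \<le> 5 * p}" for t
  define B where "B = {C. C \<subseteq> I \<and> card C \<le> 5 * p}"
  have finB: "finite B" unfolding B_def using fin by (simp add: finite_subset[of _ "Pow I"] subset_iff)
  have cardBl: "card (Bl t) \<le> card B" for t
  proof -
    have "inj_on (\<lambda>A. (A - D t) \<union> (D t - A)) (Bl t)"
      by (rule inj_onI) blast
    moreover have "(\<lambda>A. (A - D t) \<union> (D t - A)) ` Bl t \<subseteq> B"
      unfolding Bl_def B_def using Dsub by blast
    ultimately show ?thesis using finB card_inj_on_le by blast
  qed
  have cover: "U \<subseteq> (\<Union>t\<in>\<sigma> ` U. Bl t)"
    unfolding U_def Bl_def using close by blast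
  have finU: "finite U" unfolding U_def using fin by simp
  have "card U \<le> card (\<Union>t\<in>\<sigma> ` U. Bl t)"
  proof (rule card_mono[OF _ cover])
    show "finite (\<Union>t\<in>\<sigma> ` U. Bl t)" using finU fin unfolding Bl_def
      by (intro finite_UN_I) (auto intro: finite_subset[of _ "Pow I"])
  qed
  also have "\<dots> \<le> (\<Sum>t\<in>\<sigma> ` U. card (Bl t))" by (rule card_UN_le) (use finU in simp)
  also have "\<dots> \<le> card (\<sigma> ` U) * card B" using sum_mono[of "\<sigma> ` U" "\<lambda>t. card (Bl t)" "\<lambda>_. card B"] cardBl by simp
  finally have c1: "2^(15*p) \<le> card (\<sigma> ` U) * card B" unfolding U_def using fin cI by (simp add: card_Pow)
  have "\<sigma> ` U \<subseteq> {s. length s < p}" unfolding U_def using short by auto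
  moreover have "finite {s::bool list. length s < p}"
    using finite_lists_length_le[of "UNIV::bool set" p] by (rule finite_subset[rotated]) auto
  ultimately have "card (\<sigma> ` U) < 2^p" using short_lists[of p]
    by (meson card_mono le_less_trans)
  have bb: "card B * 2^(10*p) \<le> (3::nat)^(15*p)"
    using ball_bound[OF fin, of "5*p"] cI unfolding B_def by simp
  have "(2::nat)^(15*p) * 2^(10*p) \<le> card (\<sigma> ` U) * (card B * 2^(10*p))"
    using c1 by (simp add: mult.assoc)
  also have "\<dots> \<le> card (\<sigma> ` U) * 3^(15*p)" using bb by (rule mult_le_mono2)
  also have "\<dots> \<le> card (\<sigma> ` U) * 2^(24*p)"
  proof -
    have "(3::nat)^(15*p) = (3^15)^p" by (simp add: power_mult)
    also have "\<dots> \<le> (2^24)^p" by (rule power_mono) simp_all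
    also have "\<dots> = 2^(24*p)" by (simp add: power_mult)
    finally show ?thesis by simp
  qed
  also have "\<dots> < 2^p * 2^(24*p)" using \<open>card (\<sigma> ` U) < 2^p\<close> by simp
  finally have "(2::nat)^(25*p) < 2^(25*p)" by (simp add: power_add[symmetric])
  thus False by simp
qed

definition wA :: "nat \<Rightarrow> nat \<Rightarrow> (nat \<times> nat) set \<Rightarrow> nat \<Rightarrow> nat \<Rightarrow> real" where
  "wA n k A a b = (if a < k \<and> k \<le> b \<and> b < n then 1 + (if (a, b) \<in> A then 1 else 0)
      else if b < k \<and> k \<le> a \<and> a < n then 2 / (real n)^2 else 0)"

lemma wset_pairwise:
  assumes "\<And>a b. w a b \<le> \<beta> * w b a"
  shows "wset w S T \<le> \<beta> * wset w T S"
proof -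
  have "wset w S T \<le> (\<Sum>a\<in>S. \<Sum>b\<in>T. \<beta> * w b a)"
    unfolding wset_def by (intro sum_mono assms)
  also have "\<dots> = \<beta> * (\<Sum>b\<in>T. \<Sum>a\<in>S. w b a)"
    by (simp add: sum_distrib_left sum.swap[of _ S T])
  finally show ?thesis unfolding wset_def .
qed

lemma wA_balanced:
  assumes n2: "n \<ge> 2" and k1: "1 \<le> k" and kn: "k < n"
  shows "balanced n (real n ^ 2) (wA n k A)"
proof -
  let ?w = "wA n k A"
  have npos: "real n > 0" using n2 by simp
  have d: "2 / (real n)^2 > 0" using npos by simp
  have nn: "0 \<le> ?w a b" for a b unfolding wA_def using d by auto
  have wg: "wgraph n ?w" unfolding wgraph_def wA_def using nn by (auto simp: wA_def)
  have pw: "?w a b \<le> real n ^ 2 * ?w b a" for a b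
  proof -
    have "real n \<ge> 2" using n2 by simp
    hence n4: "real n ^ 2 \<ge> 4" using power_mono[of 2 "real n" 2] by simp
    consider (f) "a < k \<and> k \<le> b \<and> b < n" | (bk) "b < k \<and> k \<le> a \<and> a < n"
      | (z) "\<not> (a < k \<and> k \<le> b \<and> b < n)" "\<not> (b < k \<and> k \<le> a \<and> a < n)" by blast
    thus ?thesis
    proof cases
      case f
      hence "?w b a = 2 / (real n)^2" "?w a b \<le> 2" unfolding wA_def by auto
      thus ?thesis using npos by simp
    next
      case bk
      hence "?w a b = 2 / (real n)^2" "?w b a \<ge> 1" unfolding wA_def by auto
      moreover have "2 / (real n)^2 \<le> 1" using n4 by (simp add: divide_le_eq)
      moreover have "1 \<le> real n ^ 2 * ?w b a" using \<open>?w b a \<ge> 1\<close> n4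
        using mult_mono[of 1 "real n ^ 2" 1 "?w b a"] by simp
      ultimately show ?thesis by linarith
    next
      case z
      hence "?w a b = 0" unfolding wA_def by auto
      thus ?thesis using nn[of b a] by simp
    qed
  qed
  let ?R = "{(a, b). a < n \<and> b < n \<and> ?w a b > 0}"
  have fw: "(a, b) \<in> ?R" if "a < k" "k \<le> b" "b < n" for a b
    using that d unfolding wA_def by auto
  have bw: "(b, a) \<in> ?R" if "a < k" "k \<le> b" "b < n" for a b
    using that d unfolding wA_def by auto
  have sc: "strongly_connected n ?w"
    unfolding strongly_connected_def
  proof (intro allI impI)
    fix i j assume i: "i < n" and j: "j < n"
    show "(i, j) \<in> ?R\<^sup>*"
    proof (cases "i < k")
      case True
      show ?thesis
      proof (cases "j < k")
        case True
        have "(i, k) \<in> ?R" by (rule fw) (use \<open>i < k\<close> kn in auto)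
        moreover have "(k, j) \<in> ?R" by (rule bw) (use True kn in auto)
        ultimately show ?thesis by (rule rtrancl_trans[OF r_into_rtrancl r_into_rtrancl])
      next
        case False
        have "(i, j) \<in> ?R" by (rule fw) (use \<open>i < k\<close> False j in auto)
        thus ?thesis by (rule r_into_rtrancl)
      qed
    next
      case False
      show ?thesis
      proof (cases "j < k")
        case True
        have "(i, j) \<in> ?R" by (rule bw) (use True False i in auto)
        thus ?thesis by (rule r_into_rtrancl)
      next
        case False
        have "(i, 0) \<in> ?R" by (rule bw) (use \<open>\<not> i < k\<close> i k1 in auto)
        moreover have "(0, j) \<in> ?R" by (rule fw) (use False j k1 in auto)
        ultimately show ?thesis by (rule rtrancl_trans[OF r_into_rtrancl r_into_rtrancl])
      qed
    qed
  qed
  show ?thesis unfolding balanced_def using wg sc wset_pairwise[of "wA n k A" "real n ^ 2", OF pw] by blast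
qed

lemma cut_facts:
  fixes i j n k :: nat
  assumes ij: "i < k" "k \<le> j" "j < n"
  defines "S \<equiv> insert i ({k..<n} - {j})"
  defines "T \<equiv> {0..<n} - S"
  shows "wset (wA n k A) S T = wset (wA n k {}) S T + (if (i, j) \<in> A then 1 else 0)"
    and "0 \<le> wset (wA n k {}) S T" and "wset (wA n k {}) S T \<le> 3"
proof -
  have finS: "finite S" and finT: "finite T" unfolding S_def T_def by auto
  have iS: "i \<in> S" and jT: "j \<in> T" using ij unfolding S_def T_def by auto
  have key: "(a < k \<and> k \<le> b \<and> b < n) \<longleftrightarrow> (a = i \<and> b = j)" if "a \<in> S" "b \<in> T" for a b
    using that ij unfolding S_def T_def by auto
  have split: "wA n k A a b = wA n k {} a b + (if a = i \<and> b = j \<and> (i, j) \<in> A then 1 else 0)"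
    if "a \<in> S" "b \<in> T" for a b
    using key[OF that] unfolding wA_def by auto
  have "wset (wA n k A) S T = wset (wA n k {}) S T
      + (\<Sum>a\<in>S. \<Sum>b\<in>T. (if a = i \<and> b = j \<and> (i, j) \<in> A then 1 else 0))"
    unfolding wset_def by (simp add: split sum.distrib cong: sum.cong)
  also have "(\<Sum>a\<in>S. \<Sum>b\<in>T. (if a = i \<and> b = j \<and> (i, j) \<in> A then 1 else 0 :: real))
      = (\<Sum>a\<in>S. (if a = i \<and> (i, j) \<in> A then 1 else 0))"
  proof (rule sum.cong[OF refl])
    fix a assume "a \<in> S"
    show "(\<Sum>b\<in>T. (if a = i \<and> b = j \<and> (i, j) \<in> A then 1 else 0 :: real))
        = (if a = i \<and> (i, j) \<in> A then 1 else 0)"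
      using finT jT by (cases "a = i \<and> (i, j) \<in> A") (auto simp: sum.delta)
  qed
  also have "\<dots> = (if (i, j) \<in> A then 1 else 0)"
    using finS iS by (cases "(i, j) \<in> A") (auto simp: sum.delta)
  finally show "wset (wA n k A) S T = wset (wA n k {}) S T + (if (i, j) \<in> A then 1 else 0)" .
  have npos: "real n > 0" using ij by simp
  show "0 \<le> wset (wA n k {}) S T" unfolding wset_def wA_def
    by (intro sum_nonneg) auto
  have bnd: "wA n k {} a b \<le> (if a = i \<and> b = j then 1 else 0) + 2 / (real n)^2"
    if "a \<in> S" "b \<in> T" for a b
    using key[OF that] npos unfolding wA_def by auto
  have "wset (wA n k {}) S T \<le> (\<Sum>a\<in>S. \<Sum>b\<in>T. (if a = i \<and> b = j then 1 else 0) + 2 / (real n)^2)"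
    unfolding wset_def by (intro sum_mono bnd)
  also have "\<dots> = (\<Sum>a\<in>S. \<Sum>b\<in>T. (if a = i \<and> b = j then 1 else 0 :: real)) + real (card S) * real (card T) * (2 / (real n)^2)"
    by (simp add: sum.distrib sum_distrib_left)
  also have "(\<Sum>a\<in>S. \<Sum>b\<in>T. (if a = i \<and> b = j then 1 else 0 :: real)) = 1"
  proof -
    have "(\<Sum>a\<in>S. \<Sum>b\<in>T. (if a = i \<and> b = j then 1 else 0 :: real)) = (\<Sum>a\<in>S. (if a = i then 1 else 0))"
      by (rule sum.cong[OF refl]) (use finT jT in \<open>auto simp: sum.delta\<close>)
    also have "\<dots> = 1" using finS iS by (simp add: sum.delta)
    finally show ?thesis .
  qed
  also have "real (card S) * real (card T) * (2 / (real n)^2) \<le> 2"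
  proof -
    have "card S \<le> n" using card_mono[of "{0..<n}" S] unfolding S_def using ij by auto
    moreover have "card T \<le> n" using card_mono[of "{0..<n}" T] unfolding T_def by auto
    ultimately have "real (card S) * real (card T) * (2 / (real n)^2) \<le> real n * real n * (2 / (real n)^2)"
      by (intro mult_right_mono mult_mono) auto
    also have "real n * real n * (2 / (real n)^2) = 2" using npos by (simp add: power2_eq_square)
    finally show ?thesis .
  qed
  finally show "wset (wA n k {}) S T \<le> 3" by simp
qed

lemma lin_aux: "100 * x \<le> X \<Longrightarrow> 100 \<le> (x::real) \<Longrightarrow> (X - 2 * x + 1) / 4 \<le> P * 15 + 14 \<Longrightarrow> X / 1000 \<le> P"
  by (simp add: field_simps)

lemma arith_final:
  fixes n k p :: nat
  assumes "n \<ge> 100" "k = n div 2" "p = (k * k) div 15"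
  shows "1/1000 * real n * sqrt (real n ^ 2) \<le> real p"
proof -
  have "2 * k + 1 \<ge> n" using assms by simp
  hence "real n \<le> real (2 * k + 1)" by (simp only: of_nat_le_iff)
  hence k: "real k \<ge> (real n - 1) / 2" by simp
  have "p * 15 + 14 \<ge> k * k" using assms by simp
  hence "real p * 15 + 14 \<ge> real k * real k" by (metis of_nat_le_iff of_nat_mult of_nat_add of_nat_numeral)
  moreover have "real k * real k \<ge> ((real n - 1) / 2) * ((real n - 1) / 2)"
    using k assms by (intro mult_mono) auto
  moreover have "real n \<ge> 100" using assms by simp
  moreover have "((real n - 1) / 2) * ((real n - 1) / 2) = (real n * real n - 2 * real n + 1) / 4"
    by (simp add: field_simps power2_eq_square)
  moreover have "real n * real n \<ge> 100 * real n" using \<open>real n \<ge> 100\<close>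
    by (intro mult_right_mono) auto
  ultimately have "real k * real k \<ge> (real n * real n - 2 * real n + 1) / 4"
    and "real p * 15 + 14 \<ge> real k * real k" and "real n * real n \<ge> 100 * real n" and "real n \<ge> 100"
    by linarith+
  hence "real p * 15 + 14 \<ge> (real n * real n - 2 * real n + 1) / 4" by linarith
  with \<open>real n * real n \<ge> 100 * real n\<close> \<open>real n \<ge> 100\<close>
  have "real p \<ge> real n * real n / 1000" using lin_aux by blast
  thus ?thesis by (simp add: power2_eq_square)
qed

theorem lemma18:
  shows "\<exists>c > 0. \<exists>N. \<forall>n \<ge> N. \<forall>g f.
     foreach_cut_sketch n (real n ^ 2) (1/10) g f \<longrightarrow>
     (\<exists>w. balanced n (real n ^ 2) w \<and>
        (\<exists>s \<in> set_pmf (g w). real (length s) \<ge> c * real n * sqrt (real n ^ 2)))"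
proof (intro exI[of _ "1/1000"] conjI exI[of _ "100::nat"] allI impI)
  fix n :: nat and g f
  assume n: "100 \<le> n" and sk: "foreach_cut_sketch n (real n ^ 2) (1/10) g f"
  define k where "k = n div 2"
  define p where "p = (k * k) div 15"
  have k1: "1 \<le> k" and kn: "k < n" and n2: "2 \<le> n" using n unfolding k_def by auto
  have "50 \<le> k" using n unfolding k_def by simp
  hence "50 * 50 \<le> k * k" by (intro mult_le_mono)
  hence p1: "1 \<le> p" unfolding p_def by simp
  have "k \<le> n - k" unfolding k_def by presburger
  hence kk: "k * k \<le> k * (n - k)" by (rule mult_le_mono2)
  have "15 * p \<le> k * k" unfolding p_def using times_div_less_eq_dividend[of 15 "k*k"] by simp
  hence "15 * p \<le> k * (n - k)" using kk by (rule le_trans)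
  hence "15 * p \<le> card ({0..<k} \<times> {k..<n})" by (simp add: card_cartesian_product)
  then obtain I where IS: "I \<subseteq> {0..<k} \<times> {k..<n}" and cI: "card I = 15 * p" and finI: "finite I"
    by (rule obtain_subset_with_card_n)
  define Sx where "Sx x = insert (fst x) ({k..<n} - {snd x})" for x :: "nat \<times> nat"
  define T where "T x = {0..<n} - Sx x" for x
  define c0 where "c0 x = wset (wA n k {}) (Sx x) (T x)" for x
  define D where "D s = {x\<in>I. f (Sx x) s > 11/10 * c0 x}" for s
  define E where "E A x = {s. (1 - 1/10) * wset (wA n k A) (Sx x) (T x) \<le> f (Sx x) s \<and>
              f (Sx x) s \<le> (1 + 1/10) * wset (wA n k A) (Sx x) (T x)}" for A x
  have bal: "balanced n (real n ^ 2) (wA n k A)" for A using wA_balanced[OF n2 k1 kn] .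
  have correct: "(x \<in> A \<longleftrightarrow> x \<in> D s)" if "x \<in> I" "s \<in> E A x" for A x s
  proof -
    obtain i j where x: "x = (i, j)" by fastforce
    have ij: "i < k" "k \<le> j" "j < n" using IS that(1) x by auto
    note cf = cut_facts(1)[OF ij, where A=A] cut_facts(2,3)[OF ij]
    have cut: "wset (wA n k A) (Sx x) (T x) = c0 x + (if x \<in> A then 1 else 0)"
      using cf(1) unfolding c0_def T_def Sx_def x by simp
    have c03: "c0 x \<le> 3" "0 \<le> c0 x" using cf(2,3) unfolding c0_def T_def Sx_def x by simp_all
    show ?thesis
    proof (cases "x \<in> A")
      case True
      hence "f (Sx x) s \<ge> 9/10 * (c0 x + 1)" using that(2) cut unfolding E_def by simp
      moreover have "9/10 * (c0 x + 1) = 9/10 * c0 x + 9/10" by (simp add: algebra_simps)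
      ultimately have "f (Sx x) s > 11/10 * c0 x" using c03 by linarith
      thus ?thesis using True that(1) unfolding D_def by simp
    next
      case False
      hence "f (Sx x) s \<le> 11/10 * c0 x" using that(2) cut unfolding E_def by simp
      thus ?thesis using False unfolding D_def by simp
    qed
  qed
  have ex: "\<exists>s. A \<subseteq> I \<longrightarrow> s \<in> set_pmf (g (wA n k A)) \<and> card ((A - D s) \<union> (D s - A)) \<le> 5 * p" for A
  proof (cases "A \<subseteq> I")
    case True
    have pr: "\<forall>x\<in>I. measure_pmf.prob (g (wA n k A)) (E A x) \<ge> 2/3"
    proof
      fix x assume "x \<in> I"
      have "Sx x \<subseteq> {0..<n}" using IS \<open>x \<in> I\<close> kn unfolding Sx_def by auto
      thus "measure_pmf.prob (g (wA n k A)) (E A x) \<ge> 2/3"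
        using sk bal[of A] unfolding foreach_cut_sketch_def E_def T_def by blast
    qed
    obtain s where s: "s \<in> set_pmf (g (wA n k A))"
      and big: "2/3 * card I \<le> (\<Sum>x\<in>I. indicator (E A x) s :: real)"
      using averaging[OF finI pr] by blast
    have "(\<Sum>x\<in>I. indicator (E A x) s :: real) = real (card {x\<in>I. s \<in> E A x})"
      using finI by (simp add: indicator_def sum.If_cases) (rule arg_cong[where f=card], blast)
    with big cI have c10: "10 * p \<le> card {x\<in>I. s \<in> E A x}" by simp
    have sub: "(A - D s) \<union> (D s - A) \<subseteq> I - {x\<in>I. s \<in> E A x}"
      using correct True unfolding D_def by blast
    have "card ((A - D s) \<union> (D s - A)) \<le> card (I - {x\<in>I. s \<in> E A x})"
      using finI sub by (intro card_mono) auto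
    also have "\<dots> = card I - card {x\<in>I. s \<in> E A x}"
      using finI by (intro card_Diff_subset) auto
    finally have "card ((A - D s) \<union> (D s - A)) \<le> 5 * p" using c10 cI by simp
    thus ?thesis using s by blast
  qed simp
  then obtain \<sigma> where \<sigma>: "\<And>A. A \<subseteq> I \<Longrightarrow> \<sigma> A \<in> set_pmf (g (wA n k A)) \<and>
      card ((A - D (\<sigma> A)) \<union> (D (\<sigma> A) - A)) \<le> 5 * p"
    by metis
  have Dsub: "\<forall>s. D s \<subseteq> I" unfolding D_def by auto
  obtain A where A: "A \<subseteq> I" "length (\<sigma> A) \<ge> p"
    using counting[OF finI cI p1 _ Dsub, of \<sigma>] \<sigma> by blast
  have "1/1000 * real n * sqrt (real n ^ 2) \<le> real p"
    using arith_final[OF n k_def p_def] .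
  also have "\<dots> \<le> real (length (\<sigma> A))" using A by simp
  finally show "\<exists>w. balanced n (real n ^ 2) w \<and>
        (\<exists>s \<in> set_pmf (g w). real (length s) \<ge> 1/1000 * real n * sqrt (real n ^ 2))"
    using bal[of A] \<sigma>[OF A(1)] by blast
qed simp

end
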